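(* Let $H=(S_1,\dots,S_\ell)$ be a partial route and $\xi\in[N]$. Then there exists an optimal solution $(\bar\alpha,\bar\beta)$ of the dual of the linear program $$\mathcal{L}^*_\xi(H)=\min\Big\{\sum_{v\in V_+(H)}w_vy_v:\ y(V_+(H'))\ge k_\xi(V_+(H'))-1\ (H'\subseteq H),\ y_v\le b_v\ (v\in V_+),\ y\ge0\Big\},$$ where $\bar\alpha_{H'}\ge0$ is the multiplier of the constraint for $H'$ and $\bar\beta_v\le0$ that of $y_v\le b_v$, such that $\sum_{H'\subseteq H}\bar\alpha_{H'}\le\mathcal{L}^*_\xi(H)$ and $\sum_{H'\subseteq H:\,v\in V_+(H')}\bar\alpha_{H'}+\bar\beta_v\le0$ for every $v\in V_+$ with $w_v=0$.
   Context: $G=(V,E)$ complete undirected graph with $V=\{0\}\cup V_+$ ($V_+$ customers); $D=(V,A)$ replaces each edge by two opposite arcs. Capacity $C>0$; scenario demands $d^\xi\in\mathbb{Q}^{V_+}_{\ge0}$ with $d^\xi(v)\le C$. $f(S)=\sum_{i\in S}f(i)$, $k_\xi(S)=\lceil d^\xi(S)/C\rceil$. Fixed $w\in\mathbb{Q}^{V_+}_{\ge0}$ and $b\in\mathbb{Z}^{V_+}_{\ge0}$ such that for every route $R=(v_1,\dots,v_m)$ (cycle $0,v_1,\dots,v_m,0$ through distinct customers, $v_0=v_{m+1}=0$) and every scenario $\xi$ there is an integer vector $y\in[0,b]$ for which there exist $f_{(v_{i-1},v_i)}\in[0,C]$ and $g_{v_i}\ge0$ with $f_{(v_{i-1},v_i)}+d^\xi(v_i)=f_{(v_i,v_{i+1})}+g_{v_i}$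 and $g_{v_i}\le Cy_{v_i}$ for all $i\in[m]$. A partial route $H=(S_1,\dots,S_\ell)$ is a tuple of pairwise disjoint nonempty subsets of $V_+$ with no index $i$ such that both $S_i$ and $S_{i+1}$ have more than one element; $V_+(H)=\bigcup_iS_i$; $H'\subseteq H$ means $H'=(S_i,\dots,S_j)$ with $1\le i\le j\le\ell$. *)

theory Defs
  imports Complex_Main
begin

(* Customers V_+ are a finite set Vp :: 'a set; the depot 0 is implicit.
   Demands of scenario xi: d xi :: 'a => real.  Scenarios are {1..N}. *)

definition kcap :: "real \<Rightarrow> ('a \<Rightarrow> real) \<Rightarrow> 'a set \<Rightarrow> int" where
  "kcap C dx S = \<lceil>sum dx S / C\<rceil>"

definition is_route :: "'a set \<Rightarrow> 'a list \<Rightarrow> bool" where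
  "is_route Vp vs \<longleftrightarrow> vs \<noteq> [] \<and> distinct vs \<and> set vs \<subseteq> Vp"

(* flows: f i is the flow on arc (v_i, v_{i+1}), i = 0..m, with v_0 = v_{m+1} = depot;
   g i is the value g_{v_i}, i = 1..m; v_i = vs ! (i - 1) *)
definition route_flow_ok ::
  "real \<Rightarrow> ('a \<Rightarrow> real) \<Rightarrow> 'a list \<Rightarrow> ('a \<Rightarrow> nat) \<Rightarrow> bool" where
  "route_flow_ok C dx vs y \<longleftrightarrow>
     (\<exists>f g :: nat \<Rightarrow> real.
        (\<forall>i\<le>length vs. 0 \<le> f i \<and> f i \<le> C) \<and>
        (\<forall>i\<in>{1..length vs}.
            f (i - 1) + dx (vs ! (i - 1)) = f i + g i \<and> 0 \<le> g i \<and>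
            g i \<le> C * real (y (vs ! (i - 1)))))"

definition partial_route :: "'a set \<Rightarrow> 'a set list \<Rightarrow> bool" where
  "partial_route Vp H \<longleftrightarrow>
     (\<forall>S\<in>set H. S \<noteq> {} \<and> S \<subseteq> Vp) \<and>
     (\<forall>i<length H. \<forall>j<length H. i \<noteq> j \<longrightarrow> H ! i \<inter> H ! j = {}) \<and>
     \<not> (\<exists>i. Suc i < length H \<and> card (H ! i) > 1 \<and> card (H ! Suc i) > 1)"

(* sub-partial-routes H' = (S_i,...,S_j), encoded by 0-based index pairs (i,j) *)
definition subs :: "'a set list \<Rightarrow> (nat \<times> nat) set" where
  "subs H = {(i, j). i \<le> j \<and> j < length H}"

definition Vsub :: "'a set list \<Rightarrow> nat \<times> nat \<Rightarrow> 'a set" where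
  "Vsub H p = (\<Union>t\<in>{fst p..snd p}. H ! t)"

definition VH :: "'a set list \<Rightarrow> 'a set" where
  "VH H = \<Union> (set H)"

definition primal_feas ::
  "'a set \<Rightarrow> real \<Rightarrow> ('a \<Rightarrow> real) \<Rightarrow> ('a \<Rightarrow> nat) \<Rightarrow> 'a set list \<Rightarrow> ('a \<Rightarrow> real) \<Rightarrow> bool" where
  "primal_feas Vp C dx b H y \<longleftrightarrow>
     (\<forall>p\<in>subs H. sum y (Vsub H p) \<ge> real_of_int (kcap C dx (Vsub H p)) - 1) \<and>
     (\<forall>v\<in>Vp. y v \<le> real (b v) \<and> 0 \<le> y v)"

definition Lstar ::
  "'a set \<Rightarrow> real \<Rightarrow> ('a \<Rightarrow> real) \<Rightarrow> ('a \<Rightarrow> nat) \<Rightarrow> ('a \<Rightarrow> real) \<Rightarrow> 'a set list \<Rightarrow> real" where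
  "Lstar Vp C dx b w H = Inf ((\<lambda>y. \<Sum>v\<in>VH H. w v * y v) ` {y. primal_feas Vp C dx b H y})"

definition dual_feas ::
  "'a set \<Rightarrow> ('a \<Rightarrow> real) \<Rightarrow> 'a set list \<Rightarrow> (nat \<times> nat \<Rightarrow> real) \<Rightarrow> ('a \<Rightarrow> real) \<Rightarrow> bool" where
  "dual_feas Vp w H \<alpha> \<beta> \<longleftrightarrow>
     (\<forall>p\<in>subs H. 0 \<le> \<alpha> p) \<and> (\<forall>v\<in>Vp. \<beta> v \<le> 0) \<and>
     (\<forall>v\<in>Vp. (\<Sum>p\<in>{p\<in>subs H. v \<in> Vsub H p}. \<alpha> p) + \<beta> v
               \<le> (if v \<in> VH H then w v else 0))"

definition dual_obj ::
  "'a set \<Rightarrow> real \<Rightarrow> ('a \<Rightarrow> real) \<Rightarrow> ('a \<Rightarrow> nat) \<Rightarrow> 'a set list \<Rightarrow> (nat \<times> nat \<Rightarrow> real) \<Rightarrow> ('a \<Rightarrow> real) \<Rightarrow> real" where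
  "dual_obj Vp C dx b H \<alpha> \<beta> =
     (\<Sum>p\<in>subs H. \<alpha> p * (real_of_int (kcap C dx (Vsub H p)) - 1)) + (\<Sum>v\<in>Vp. \<beta> v * real (b v))"

definition dual_opt ::
  "'a set \<Rightarrow> real \<Rightarrow> ('a \<Rightarrow> real) \<Rightarrow> ('a \<Rightarrow> nat) \<Rightarrow> ('a \<Rightarrow> real) \<Rightarrow> 'a set list \<Rightarrow> (nat \<times> nat \<Rightarrow> real) \<Rightarrow> ('a \<Rightarrow> real) \<Rightarrow> bool" where
  "dual_opt Vp C dx b w H \<alpha> \<beta> \<longleftrightarrow>
     dual_feas Vp w H \<alpha> \<beta> \<and>
     (\<forall>\<alpha>' \<beta>'. dual_feas Vp w H \<alpha>' \<beta>' \<longrightarrow> dual_obj Vp C dx b H \<alpha>' \<beta>' \<le> dual_obj Vp C dx b H \<alpha> \<beta>)"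

end

theory Submission
  imports Defs "HOL-Analysis.Analysis"
begin

lemma sum_nth_distinct:
  assumes "distinct xs"
  shows "(\<Sum>i<length xs. h (xs!i)) = sum h (set xs)"
proof -
  have "(\<Sum>i<length xs. h (xs!i)) = sum_list (map h xs)"
    by (simp add: sum_list_sum_nth atLeast0LessThan)
  also have "... = sum h (set xs)" using sum_list_distinct_conv_sum_set[OF assms] by simp
  finally show ?thesis .
qed

lemma route_bound:
  fixes C :: real and dx :: "'a \<Rightarrow> real" and b :: "'a \<Rightarrow> nat"
  assumes C: "C > 0" and T: "finite T" "T \<noteq> {}" "T \<subseteq> Vp"
    and R: "\<And>vs. is_route Vp vs \<Longrightarrow>
            \<exists>y :: 'a \<Rightarrow> nat. (\<forall>v\<in>Vp. y v \<le> b v) \<and> route_flow_ok C dx vs y"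
  shows "real_of_int (kcap C dx T) - 1 \<le> real (sum b T)"
proof -
  obtain xs where xs: "set xs = T" "distinct xs" using finite_distinct_list[OF T(1)] by blast
  have "is_route Vp xs" using xs T unfolding is_route_def by auto
  then obtain y :: "'a \<Rightarrow> nat" where y: "\<forall>v\<in>Vp. y v \<le> b v" and fl: "route_flow_ok C dx xs y"
    using R by blast
  then obtain f g :: "nat \<Rightarrow> real" where
    f: "\<forall>i\<le>length xs. 0 \<le> f i \<and> f i \<le> C" and
    g: "\<forall>i\<in>{1..length xs}. f (i - 1) + dx (xs ! (i - 1)) = f i + g i \<and> 0 \<le> g i \<and>
            g i \<le> C * real (y (xs ! (i - 1)))"
    unfolding route_flow_ok_def by blast
  define m where "m = length xs"
  have tele: "j \<le> m \<Longrightarrow> f 0 + (\<Sum>i<j. dx (xs!i)) = f j + (\<Sum>i<j. g (Suc i))" for j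
  proof (induction j)
    case 0 then show ?case by simp
  next
    case (Suc j)
    have "Suc j \<in> {1..length xs}" using Suc.prems m_def by auto
    then have "f j + dx (xs ! j) = f (Suc j) + g (Suc j)" using g by fastforce
    then show ?case using Suc by simp
  qed
  have gle: "(\<Sum>i<m. g (Suc i)) \<le> (\<Sum>i<m. C * real (y (xs ! i)))"
  proof (rule sum_mono)
    fix i assume "i \<in> {..<m}"
    then have "Suc i \<in> {1..length xs}" using m_def by auto
    then show "g (Suc i) \<le> C * real (y (xs ! i))" using g by fastforce
  qed
  have sd: "(\<Sum>i<m. dx (xs!i)) = sum dx T"
    using sum_nth_distinct[OF xs(2), of dx] xs(1) m_def by simp
  have sy: "(\<Sum>i<m. C * real (y (xs ! i))) = C * real (sum y T)"
  proof -
    have "(\<Sum>i<m. real (y (xs ! i))) = real (sum y T)"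
      using sum_nth_distinct[OF xs(2), of "\<lambda>v. real (y v)"] xs(1) m_def by simp
    then show ?thesis by (simp add: sum_distrib_left[symmetric])
  qed
  have "sum y T \<le> sum b T" using y T(3) by (intro sum_mono) auto
  then have yb: "C * real (sum y T) \<le> C * real (sum b T)" using C by (metis of_nat_le_iff mult_left_mono less_imp_le)
  have "f 0 \<ge> 0" "f m \<le> C" using f m_def by auto
  then have "sum dx T \<le> C + C * real (sum b T)"
    using tele[of m] gle sd sy yb by linarith
  then have "sum dx T / C \<le> real (sum b T) + 1" using C by (simp add: divide_le_eq algebra_simps)
  then have "kcap C dx T \<le> int (sum b T) + 1"
    unfolding kcap_def by (simp add: ceiling_le_iff)
  then show ?thesis by linarith
qed


lemma cont_coord [continuous_intros]: "continuous_on S (\<lambda>x::'i\<Rightarrow>real. x i)"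
  by (rule continuous_on_subset[OF continuous_on_product_coordinates]) auto

locale L8 =
  fixes Vp :: "'a set" and C :: real and dx :: "'a \<Rightarrow> real" and b :: "'a \<Rightarrow> nat"
    and w :: "'a \<Rightarrow> real" and H :: "'a set list"
  assumes finV: "finite Vp" and pr: "partial_route Vp H" and wnn: "\<forall>v\<in>Vp. 0 \<le> w v"
    and kb: "\<And>T. T \<subseteq> Vp \<Longrightarrow> T \<noteq> {} \<Longrightarrow> real_of_int (kcap C dx T) - 1 \<le> real (sum b T)"
begin

definition kk where "kk p = real_of_int (kcap C dx (Vsub H p))"
definition Af where "Af \<alpha> v = (\<Sum>p\<in>{p\<in>subs H. v \<in> Vsub H p}. \<alpha> p)"
definition wp where "wp v = (if v \<in> VH H then w v else 0)"
definition bet where "bet \<alpha> v = min 0 (wp v - Af \<alpha> v)"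
definition F where "F \<alpha> = dual_obj Vp C dx b H \<alpha> (bet \<alpha>)"
definition W where "W = (\<Sum>v\<in>VH H. w v)"
definition B where "B = {\<alpha>. (\<forall>p\<in>subs H. 0 \<le> \<alpha> p \<and> \<alpha> p \<le> W) \<and> (\<forall>p. p \<notin> subs H \<longrightarrow> \<alpha> p = 0)}"

lemma finP: "finite (subs H)"
proof -
  have "subs H \<subseteq> {..<length H} \<times> {..<length H}" unfolding subs_def by auto
  then show ?thesis by (rule finite_subset) auto
qed

lemma Hset: "S \<in> set H \<Longrightarrow> S \<noteq> {} \<and> S \<subseteq> Vp"
  using pr unfolding partial_route_def by blast

lemma VH_sub: "VH H \<subseteq> Vp" using Hset unfolding VH_def by blast

lemma finVH: "finite (VH H)" using VH_sub finV finite_subset by blast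

lemma Vsub_sub: "p \<in> subs H \<Longrightarrow> Vsub H p \<subseteq> VH H"
  unfolding subs_def Vsub_def VH_def by (auto, meson le_less_trans nth_mem)

lemma Vsub_subV: "p \<in> subs H \<Longrightarrow> Vsub H p \<subseteq> Vp" using Vsub_sub VH_sub by blast

lemma finVsub: "p \<in> subs H \<Longrightarrow> finite (Vsub H p)" using Vsub_subV finV finite_subset by blast

lemma Vsub_ne: "p \<in> subs H \<Longrightarrow> Vsub H p \<noteq> {}"
proof -
  assume p: "p \<in> subs H"
  then have "fst p < length H" unfolding subs_def by auto
  then have "H ! fst p \<in> set H" by simp
  then have "H ! fst p \<noteq> {}" using Hset by blast
  moreover have "H ! fst p \<subseteq> Vsub H p" using p unfolding Vsub_def subs_def by auto
  ultimately show ?thesis by blast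
qed

lemma kbP: "p \<in> subs H \<Longrightarrow> kk p - 1 \<le> real (sum b (Vsub H p))"
  unfolding kk_def by (rule kb[OF Vsub_subV Vsub_ne])

lemma wp_nn: "0 \<le> wp v" using wnn VH_sub unfolding wp_def by (simp add: subset_iff)

lemma W_nn: "0 \<le> W" unfolding W_def using wnn VH_sub by (intro sum_nonneg) auto

lemma wp_le_W: "wp v \<le> W"
proof (cases "v \<in> VH H")
  case True
  then show ?thesis unfolding wp_def W_def using wnn VH_sub finVH
    by (auto intro!: member_le_sum)
qed (simp add: wp_def W_nn)

lemma swap: fixes c :: "'a \<Rightarrow> real" and g :: "nat \<times> nat \<Rightarrow> real" shows "(\<Sum>v\<in>Vp. c v * Af g v) = (\<Sum>p\<in>subs H. g p * sum c (Vsub H p))"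
proof -
  have "(\<Sum>v\<in>Vp. c v * Af g v) = (\<Sum>v\<in>Vp. \<Sum>p\<in>{p\<in>subs H. v \<in> Vsub H p}. c v * g p)"
    unfolding Af_def by (rule sum.cong[OF refl]) (simp add: sum_distrib_left)
  also have "... = (\<Sum>p\<in>subs H. \<Sum>v\<in>{v\<in>Vp. v \<in> Vsub H p}. c v * g p)"
    by (rule sum.swap_restrict[OF finV finP])
  also have "... = (\<Sum>p\<in>subs H. \<Sum>v\<in>Vsub H p. c v * g p)"
  proof (rule sum.cong[OF refl])
    fix p assume "p \<in> subs H"
    then have "{v\<in>Vp. v \<in> Vsub H p} = Vsub H p" using Vsub_subV by blast
    then show "(\<Sum>v\<in>{v\<in>Vp. v \<in> Vsub H p}. c v * g p) = (\<Sum>v\<in>Vsub H p. c v * g p)" by simp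
  qed
  also have "... = (\<Sum>p\<in>subs H. g p * sum c (Vsub H p))"
    by (simp add: sum_distrib_left sum_distrib_right mult.commute)
  finally show ?thesis .
qed

lemma F_expand: "F \<alpha> = (\<Sum>p\<in>subs H. \<alpha> p * (kk p - 1)) + (\<Sum>v\<in>Vp. bet \<alpha> v * real (b v))"
  unfolding F_def dual_obj_def kk_def by simp

lemma F_cont: "continuous_on S F"
  unfolding F_expand[abs_def] bet_def Af_def by (intro continuous_intros)

lemma B_PiE: "B = PiE UNIV (\<lambda>p. if p \<in> subs H then {0..W} else {0})"
  unfolding B_def PiE_def Pi_def by (auto split: if_splits)

lemma B_compact: "compact B"
proof -
  have "compactin (product_topology (\<lambda>i. euclidean) UNIV) (PiE UNIV (\<lambda>p. if p \<in> subs H then {0..W::real} else {0}))"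
    by (subst compactin_PiE) auto
  then show ?thesis unfolding B_PiE euclidean_product_topology by simp
qed

lemma B_ne: "(\<lambda>p. 0) \<in> B" unfolding B_def using W_nn by auto


lemma Af_ge: fixes \<alpha> :: "nat \<times> nat \<Rightarrow> real" shows "p \<in> subs H \<Longrightarrow> v \<in> Vsub H p \<Longrightarrow> \<forall>q\<in>subs H. 0 \<le> \<alpha> q \<Longrightarrow> \<alpha> p \<le> Af \<alpha> v"
  unfolding Af_def by (rule member_le_sum) (auto intro: finite_subset[OF _ finP])

lemma Af_mono: fixes \<alpha> :: "nat \<times> nat \<Rightarrow> real" shows "\<forall>q\<in>subs H. \<alpha> q \<le> \<gamma> q \<Longrightarrow> Af \<alpha> v \<le> Af \<gamma> v"
  unfolding Af_def by (rule sum_mono) auto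

lemma feas_bet: "\<forall>p\<in>subs H. 0 \<le> \<alpha> p \<Longrightarrow> dual_feas Vp w H \<alpha> (bet \<alpha>)"
  unfolding dual_feas_def Af_def[symmetric] wp_def[symmetric] bet_def by auto

lemma obj_le_F: "dual_feas Vp w H \<alpha> \<beta> \<Longrightarrow> dual_obj Vp C dx b H \<alpha> \<beta> \<le> F \<alpha>"
  unfolding F_def dual_obj_def
proof (intro add_left_mono sum_mono)
  fix v assume f: "dual_feas Vp w H \<alpha> \<beta>" and v: "v \<in> Vp"
  then have "\<beta> v \<le> bet \<alpha> v"
    unfolding dual_feas_def Af_def[symmetric] wp_def[symmetric] bet_def by auto
  then show "\<beta> v * real (b v) \<le> bet \<alpha> v * real (b v)" by (rule mult_right_mono) simp
qed

lemma weak: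
  assumes y: "primal_feas Vp C dx b H y" and f: "dual_feas Vp w H \<alpha> \<beta>"
  shows "dual_obj Vp C dx b H \<alpha> \<beta> \<le> (\<Sum>v\<in>VH H. w v * y v)"
proof -
  have 1: "(\<Sum>p\<in>subs H. \<alpha> p * (kk p - 1)) \<le> (\<Sum>p\<in>subs H. \<alpha> p * sum y (Vsub H p))"
    using y f unfolding primal_feas_def dual_feas_def kk_def
    by (intro sum_mono mult_left_mono) auto
  have 2: "(\<Sum>p\<in>subs H. \<alpha> p * sum y (Vsub H p)) = (\<Sum>v\<in>Vp. y v * Af \<alpha> v)"
    using swap[of y \<alpha>] by simp
  have 3: "(\<Sum>v\<in>Vp. \<beta> v * real (b v)) \<le> (\<Sum>v\<in>Vp. \<beta> v * y v)"
    using y f unfolding primal_feas_def dual_feas_def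
    by (intro sum_mono mult_left_mono_neg) auto
  have 4: "(\<Sum>v\<in>Vp. y v * Af \<alpha> v) + (\<Sum>v\<in>Vp. \<beta> v * y v) = (\<Sum>v\<in>Vp. (Af \<alpha> v + \<beta> v) * y v)"
    by (simp add: sum.distrib[symmetric] algebra_simps)
  have 5: "(\<Sum>v\<in>Vp. (Af \<alpha> v + \<beta> v) * y v) \<le> (\<Sum>v\<in>Vp. wp v * y v)"
    using y f unfolding primal_feas_def dual_feas_def Af_def[symmetric] wp_def[symmetric]
    by (intro sum_mono mult_right_mono) auto
  have 6: "(\<Sum>v\<in>Vp. wp v * y v) = (\<Sum>v\<in>VH H. wp v * y v)"
    by (rule sum.mono_neutral_right[OF finV VH_sub]) (auto simp: wp_def)
  have 7: "(\<Sum>v\<in>VH H. wp v * y v) = (\<Sum>v\<in>VH H. w v * y v)"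
    by (rule sum.cong) (auto simp: wp_def)
  show ?thesis unfolding dual_obj_def kk_def[symmetric]
    using 1 2 3 4 5 6 7 by linarith
qed

lemma primal_b: "primal_feas Vp C dx b H (\<lambda>v. real (b v))"
  unfolding primal_feas_def using kbP unfolding kk_def by auto

lemma Lstar_ge:
  assumes "\<And>y. primal_feas Vp C dx b H y \<Longrightarrow> z \<le> (\<Sum>v\<in>VH H. w v * y v)"
  shows "z \<le> Lstar Vp C dx b w H"
  unfolding Lstar_def using primal_b assms by (intro cInf_greatest) auto

lemma F_restrict: "F (\<lambda>p. if p \<in> subs H then \<alpha> p else 0) = F \<alpha>"
proof -
  have A: "Af (\<lambda>p. if p \<in> subs H then \<alpha> p else 0) v = Af \<alpha> v" for v
    unfolding Af_def by (rule sum.cong) auto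
  show ?thesis unfolding F_expand bet_def A by simp
qed

lemma clip:
  assumes nn: "\<forall>p\<in>subs H. 0 \<le> \<alpha> p" and z: "\<forall>p. p \<notin> subs H \<longrightarrow> \<alpha> p = 0"
  shows "F \<alpha> \<le> F (\<lambda>p. min (\<alpha> p) W)" "(\<lambda>p. min (\<alpha> p) W) \<in> B"
proof -
  define \<alpha>' where "\<alpha>' = (\<lambda>p. min (\<alpha> p) W)"
  define \<delta> where "\<delta> = (\<lambda>p. \<alpha> p - \<alpha>' p)"
  have dnn: "0 \<le> \<delta> p" for p unfolding \<delta>_def \<alpha>'_def by simp
  have a'nn: "\<forall>p\<in>subs H. 0 \<le> \<alpha>' p" using nn W_nn unfolding \<alpha>'_def by auto
  show "(\<lambda>p. min (\<alpha> p) W) \<in> B" using nn z W_nn unfolding B_def by auto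
  have Ad: "Af \<delta> v = Af \<alpha> v - Af \<alpha>' v" for v
    unfolding Af_def \<delta>_def by (simp add: sum_subtractf)
  have pv: "bet \<alpha> v + Af \<delta> v \<le> bet \<alpha>' v" for v
  proof (cases "\<exists>p\<in>subs H. v \<in> Vsub H p \<and> W < \<alpha> p")
    case True
    then obtain p where p: "p \<in> subs H" "v \<in> Vsub H p" "W < \<alpha> p" by blast
    then have "\<alpha>' p = W" unfolding \<alpha>'_def by simp
    moreover have "\<alpha>' p \<le> Af \<alpha>' v" using Af_ge[OF p(1,2) a'nn] .
    moreover have "Af \<alpha>' v \<le> Af \<alpha> v" by (rule Af_mono) (auto simp: \<alpha>'_def)
    moreover have "wp v \<le> W" by (rule wp_le_W)
    ultimately show ?thesis unfolding bet_def Ad by auto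
  next
    case False
    then have "Af \<alpha>' v = Af \<alpha> v" unfolding Af_def \<alpha>'_def by (intro sum.cong) auto
    then show ?thesis unfolding Ad bet_def by simp
  qed
  have s1: "(\<Sum>p\<in>subs H. \<alpha> p * (kk p - 1)) = (\<Sum>p\<in>subs H. \<alpha>' p * (kk p - 1)) + (\<Sum>p\<in>subs H. \<delta> p * (kk p - 1))"
    unfolding \<delta>_def by (simp add: sum.distrib[symmetric] algebra_simps)
  have s2: "(\<Sum>p\<in>subs H. \<delta> p * (kk p - 1)) \<le> (\<Sum>p\<in>subs H. \<delta> p * sum (\<lambda>v. real (b v)) (Vsub H p))"
    using kbP dnn by (intro sum_mono mult_left_mono) auto
  have s3: "(\<Sum>p\<in>subs H. \<delta> p * sum (\<lambda>v. real (b v)) (Vsub H p)) = (\<Sum>v\<in>Vp. real (b v) * Af \<delta> v)"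
    using swap[of "\<lambda>v. real (b v)" \<delta>] by simp
  have s4: "(\<Sum>v\<in>Vp. bet \<alpha> v * real (b v)) + (\<Sum>v\<in>Vp. real (b v) * Af \<delta> v) \<le> (\<Sum>v\<in>Vp. bet \<alpha>' v * real (b v))"
  proof -
    have "(\<Sum>v\<in>Vp. bet \<alpha> v * real (b v)) + (\<Sum>v\<in>Vp. real (b v) * Af \<delta> v)
        = (\<Sum>v\<in>Vp. (bet \<alpha> v + Af \<delta> v) * real (b v))"
      by (simp add: sum.distrib[symmetric] algebra_simps)
    also have "... \<le> (\<Sum>v\<in>Vp. bet \<alpha>' v * real (b v))"
      using pv by (intro sum_mono mult_right_mono) auto
    finally show ?thesis .
  qed
  show "F \<alpha> \<le> F (\<lambda>p. min (\<alpha> p) W)" unfolding \<alpha>'_def[symmetric] F_expand using s1 s2 s3 s4 by linarith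
qed

lemma glob_aux:
  assumes "\<forall>\<gamma>\<in>B. F \<gamma> \<le> F \<alpha>0" and "\<forall>p\<in>subs H. 0 \<le> \<alpha> p"
  shows "F \<alpha> \<le> F \<alpha>0"
proof -
  define r where "r = (\<lambda>p. if p \<in> subs H then \<alpha> p else 0)"
  have "F \<alpha> = F r" unfolding r_def F_restrict ..
  also have "... \<le> F (\<lambda>p. min (r p) W)" using assms(2) by (intro clip(1)) (auto simp: r_def)
  also have "... \<le> F \<alpha>0" using assms(1) clip(2)[of r] assms(2) by (auto simp: r_def)
  finally show ?thesis .
qed


lemma main:
  "\<exists>\<alpha> \<beta>. dual_opt Vp C dx b w H \<alpha> \<beta> \<and>
            sum \<alpha> (subs H) \<le> Lstar Vp C dx b w H \<and>
            (\<forall>v\<in>Vp. w v = 0 \<longrightarrow>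
               (\<Sum>p\<in>{p\<in>subs H. v \<in> Vsub H p}. \<alpha> p) + \<beta> v \<le> 0)"
proof -
  obtain \<alpha>0 where a0: "\<alpha>0 \<in> B" "\<forall>\<gamma>\<in>B. F \<gamma> \<le> F \<alpha>0"
    using continuous_attains_sup[OF B_compact _ F_cont] B_ne by blast
  have glob: "\<And>\<alpha>. \<forall>p\<in>subs H. 0 \<le> \<alpha> p \<Longrightarrow> F \<alpha> \<le> F \<alpha>0"
    using glob_aux a0(2) by blast
  define M where "M = B \<inter> {\<alpha>. F \<alpha> = F \<alpha>0}"
  have cM: "compact M" unfolding M_def
    by (intro compact_Int_closed B_compact closed_Collect_eq F_cont continuous_on_const)
  have "\<alpha>0 \<in> M" using a0 unfolding M_def by auto
  moreover have "continuous_on M (\<lambda>\<gamma>. \<Sum>p\<in>subs H. \<gamma> p)"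
    by (intro continuous_intros)
  ultimately obtain as where as: "as \<in> M" "\<forall>\<gamma>\<in>M. sum as (subs H) \<le> sum \<gamma> (subs H)"
    using continuous_attains_inf[OF cM, of "\<lambda>\<gamma>. \<Sum>p\<in>subs H. \<gamma> p"] by auto
  have asB: "as \<in> B" and Fas: "F as = F \<alpha>0" using as(1) unfolding M_def by auto
  have asnn: "\<forall>p\<in>subs H. 0 \<le> as p" and asW: "\<forall>p\<in>subs H. as p \<le> W"
    and asz: "\<forall>p. p \<notin> subs H \<longrightarrow> as p = 0" using asB unfolding B_def by auto
  define T where "T p = {v\<in>Vsub H p. wp v < Af as v}" for p
  have key: "real (sum b (T p)) \<le> kk p - 2" if p: "p \<in> subs H" and pos: "0 < as p" for p
  proof (rule ccontr)
    assume nb: "\<not> real (sum b (T p)) \<le> kk p - 2"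
    have "real_of_int (int (sum b (T p))) > real_of_int (kcap C dx (Vsub H p) - 2)"
      using nb by (simp add: kk_def)
    then have "int (sum b (T p)) > kcap C dx (Vsub H p) - 2" by (simp only: of_int_less_iff)
    then have "int (sum b (T p)) \<ge> kcap C dx (Vsub H p) - 1" by linarith
    then have "real_of_int (int (sum b (T p))) \<ge> real_of_int (kcap C dx (Vsub H p) - 1)"
      by (simp only: of_int_le_iff)
    then have bT: "real (sum b (T p)) \<ge> kk p - 1" by (simp add: kk_def)
    have finT: "finite (T p)" using finVsub[OF p] unfolding T_def by auto
    define \<epsilon> where "\<epsilon> = Min (insert (as p) ((\<lambda>v. Af as v - wp v) ` T p))"
    have epos: "0 < \<epsilon>" unfolding \<epsilon>_def using finT pos by (subst Min_gr_iff) (auto simp: T_def)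
    have ele: "\<epsilon> \<le> as p" unfolding \<epsilon>_def using finT by (intro Min_le) auto
    have ele2: "\<epsilon> \<le> Af as v - wp v" if "v \<in> T p" for v
      unfolding \<epsilon>_def using finT that by (intro Min_le) auto
    define a' where "a' = (\<lambda>q. as q - (if q = p then \<epsilon> else 0))"
    have a'B: "a' \<in> B" using asB ele epos p unfolding B_def a'_def by auto
    have Aa': "Af a' v = Af as v - (if v \<in> Vsub H p then \<epsilon> else 0)" for v
    proof -
      have "Af a' v = Af as v - (\<Sum>q\<in>{q\<in>subs H. v \<in> Vsub H q}. if q = p then \<epsilon> else 0)"
        unfolding Af_def a'_def by (simp add: sum_subtractf)
      also have "... = Af as v - (if v \<in> Vsub H p then \<epsilon> else 0)"
        using finP p by (subst sum.delta) auto
      finally show ?thesis .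
    qed
    have f1: "(\<Sum>q\<in>subs H. a' q * (kk q - 1)) = (\<Sum>q\<in>subs H. as q * (kk q - 1)) - \<epsilon> * (kk p - 1)"
    proof -
      have "(\<Sum>q\<in>subs H. a' q * (kk q - 1)) = (\<Sum>q\<in>subs H. as q * (kk q - 1)) -
              (\<Sum>q\<in>subs H. if q = p then \<epsilon> * (kk q - 1) else 0)"
        unfolding a'_def by (simp add: sum_subtractf left_diff_distrib if_distrib[where f="\<lambda>x. x * _"] cong: if_cong)
      also have "... = (\<Sum>q\<in>subs H. as q * (kk q - 1)) - \<epsilon> * (kk p - 1)"
        using finP p by (subst sum.delta) auto
      finally show ?thesis .
    qed
    have f2: "(\<Sum>v\<in>Vp. bet as v * real (b v)) + \<epsilon> * real (sum b (T p)) \<le> (\<Sum>v\<in>Vp. bet a' v * real (b v))"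
    proof -
      have TV: "T p \<subseteq> Vp" using Vsub_subV[OF p] unfolding T_def by auto
      have "\<epsilon> * real (sum b (T p)) = (\<Sum>v\<in>T p. \<epsilon> * real (b v))"
        by (simp add: sum_distrib_left)
      also have "... = (\<Sum>v\<in>Vp. if v \<in> T p then \<epsilon> * real (b v) else 0)"
        using sum.inter_restrict[OF finV, of "\<lambda>v. \<epsilon> * real (b v)" "T p"] TV
        by (simp add: Int_absorb1)
      finally have e: "\<epsilon> * real (sum b (T p)) = (\<Sum>v\<in>Vp. if v \<in> T p then \<epsilon> * real (b v) else 0)" .
      have "(\<Sum>v\<in>Vp. bet as v * real (b v)) + (\<Sum>v\<in>Vp. if v \<in> T p then \<epsilon> * real (b v) else 0)
           = (\<Sum>v\<in>Vp. bet as v * real (b v) + (if v \<in> T p then \<epsilon> * real (b v) else 0))"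
        by (simp add: sum.distrib)
      also have "... \<le> (\<Sum>v\<in>Vp. bet a' v * real (b v))"
      proof (rule sum_mono)
        fix v assume v: "v \<in> Vp"
        show "bet as v * real (b v) + (if v \<in> T p then \<epsilon> * real (b v) else 0) \<le> bet a' v * real (b v)"
        proof (cases "v \<in> T p")
          case True
          then have "v \<in> Vsub H p" "wp v < Af as v" unfolding T_def by auto
          moreover have "\<epsilon> \<le> Af as v - wp v" using ele2 True .
          ultimately have "bet a' v = bet as v + \<epsilon>" unfolding bet_def Aa' by auto
          then show ?thesis using True by (simp add: algebra_simps)
        next
          case False
          have "bet as v \<le> bet a' v" unfolding bet_def Aa' using epos by auto
          then show ?thesis using False by (simp add: mult_right_mono)
        qed
      qed
      finally show ?thesis using e by simp
    qed
    have "F a' \<ge> F as + \<epsilon> * (real (sum b (T p)) - (kk p - 1))"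
      unfolding F_expand using f1 f2 by (simp add: algebra_simps)
    moreover have "\<epsilon> * (real (sum b (T p)) - (kk p - 1)) \<ge> 0" using epos bT by simp
    ultimately have "F a' \<ge> F as" by linarith
    moreover have "F a' \<le> F \<alpha>0" using a0(2) a'B by blast
    ultimately have "a' \<in> M" using Fas a'B unfolding M_def by auto
    then have "sum as (subs H) \<le> sum a' (subs H)" using as(2) by blast
    moreover have "sum a' (subs H) = sum as (subs H) - \<epsilon>"
      unfolding a'_def using finP p by (simp add: sum_subtractf sum.delta)
    ultimately show False using epos by linarith
  qed
  have final: "sum as (subs H) \<le> F as"
  proof -
    define T0 where "T0 = {v\<in>Vp. wp v < Af as v}"
    define c where "c v = (if v \<in> T0 then real (b v) else 0)" for v
    have a: "(\<Sum>v\<in>Vp. bet as v * real (b v)) \<ge> - (\<Sum>v\<in>Vp. c v * Af as v)"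
    proof -
      have "(\<Sum>v\<in>Vp. - (c v * Af as v)) \<le> (\<Sum>v\<in>Vp. bet as v * real (b v))"
      proof (rule sum_mono)
        fix v assume v: "v \<in> Vp"
        show "- (c v * Af as v) \<le> bet as v * real (b v)"
        proof (cases "wp v < Af as v")
          case True
          then have e1: "bet as v = wp v - Af as v" unfolding bet_def by simp
          have e2: "0 \<le> wp v * real (b v)" using wp_nn by simp
          have e3: "bet as v * real (b v) = wp v * real (b v) - Af as v * real (b v)"
            unfolding e1 by (rule left_diff_distrib)
          have e4: "c v * Af as v = Af as v * real (b v)" using True v by (simp add: c_def T0_def)
          show ?thesis using e2 e3 e4 by linarith
        next
          case False
          then show ?thesis by (simp add: c_def T0_def bet_def)
        qed
      qed
      then show ?thesis by (simp add: sum_negf)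
    qed
    have b: "(\<Sum>v\<in>Vp. c v * Af as v) = (\<Sum>p\<in>subs H. as p * real (sum b (T p)))"
    proof -
      have "(\<Sum>v\<in>Vp. c v * Af as v) = (\<Sum>p\<in>subs H. as p * sum c (Vsub H p))" by (rule swap)
      also have "... = (\<Sum>p\<in>subs H. as p * real (sum b (T p)))"
      proof (rule sum.cong[OF refl])
        fix p assume p: "p \<in> subs H"
        have "sum c (Vsub H p) = sum (\<lambda>v. real (b v)) (Vsub H p \<inter> T0)"
          unfolding c_def using sum.inter_restrict[OF finVsub[OF p], of "\<lambda>v. real (b v)" T0] by simp
        also have "Vsub H p \<inter> T0 = T p" unfolding T_def T0_def using Vsub_subV[OF p] by auto
        finally show "as p * sum c (Vsub H p) = as p * real (sum b (T p))" by simp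
      qed
      finally show ?thesis .
    qed
    have c: "(\<Sum>p\<in>subs H. as p * real (sum b (T p))) \<le> (\<Sum>p\<in>subs H. as p * (kk p - 2))"
    proof (rule sum_mono)
      fix p assume p: "p \<in> subs H"
      show "as p * real (sum b (T p)) \<le> as p * (kk p - 2)"
      proof (cases "as p = 0")
        case False
        then have "0 < as p" using asnn p by force
        then show ?thesis using key[OF p] by (intro mult_left_mono) auto
      qed simp
    qed
    have d: "(\<Sum>p\<in>subs H. as p * (kk p - 1)) - (\<Sum>p\<in>subs H. as p * (kk p - 2)) = sum as (subs H)"
      by (simp add: sum_subtractf[symmetric] algebra_simps)
    show ?thesis unfolding F_expand using a b c d by linarith
  qed
  show ?thesis
  proof (intro exI conjI)
    show "dual_opt Vp C dx b w H as (bet as)"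
      unfolding dual_opt_def
    proof (intro conjI allI impI)
      show "dual_feas Vp w H as (bet as)" using feas_bet asnn by blast
      fix \<alpha>' \<beta>' assume f: "dual_feas Vp w H \<alpha>' \<beta>'"
      have "dual_obj Vp C dx b H \<alpha>' \<beta>' \<le> F \<alpha>'" by (rule obj_le_F[OF f])
      also have "... \<le> F \<alpha>0" using f unfolding dual_feas_def by (intro glob) auto
      also have "... = dual_obj Vp C dx b H as (bet as)" using Fas unfolding F_def by simp
      finally show "dual_obj Vp C dx b H \<alpha>' \<beta>' \<le> dual_obj Vp C dx b H as (bet as)" .
    qed
    show "sum as (subs H) \<le> Lstar Vp C dx b w H"
    proof (rule Lstar_ge)
      fix y assume y: "primal_feas Vp C dx b H y"
      have "sum as (subs H) \<le> F as" by (rule final)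
      also have "... \<le> (\<Sum>v\<in>VH H. w v * y v)"
        unfolding F_def by (rule weak[OF y feas_bet[OF asnn]])
      finally show "sum as (subs H) \<le> (\<Sum>v\<in>VH H. w v * y v)" .
    qed
    show "\<forall>v\<in>Vp. w v = 0 \<longrightarrow> (\<Sum>p\<in>{p\<in>subs H. v \<in> Vsub H p}. as p) + bet as v \<le> 0"
      unfolding Af_def[symmetric] bet_def wp_def by auto
  qed
qed

end

theorem lemma8:
  fixes Vp :: "'a set" and C :: real and N :: nat and d :: "nat \<Rightarrow> 'a \<Rightarrow> real"
    and w :: "'a \<Rightarrow> real" and b :: "'a \<Rightarrow> nat" and H :: "'a set list" and \<xi> :: nat
  assumes "finite Vp" and "C > 0"
    and "\<forall>\<zeta>\<in>{1..N}. \<forall>v\<in>Vp. 0 \<le> d \<zeta> v \<and> d \<zeta> v \<le> C \<and> d \<zeta> v \<in> \<rat>"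
    and "\<forall>v\<in>Vp. 0 \<le> w v \<and> w v \<in> \<rat>"
    and "\<forall>vs. is_route Vp vs \<longrightarrow> (\<forall>\<zeta>\<in>{1..N}.
            \<exists>y :: 'a \<Rightarrow> nat. (\<forall>v\<in>Vp. y v \<le> b v) \<and> route_flow_ok C (d \<zeta>) vs y)"
    and "partial_route Vp H" and "\<xi> \<in> {1..N}"
  shows "\<exists>\<alpha> \<beta>. dual_opt Vp C (d \<xi>) b w H \<alpha> \<beta> \<and>
            sum \<alpha> (subs H) \<le> Lstar Vp C (d \<xi>) b w H \<and>
            (\<forall>v\<in>Vp. w v = 0 \<longrightarrow>
               (\<Sum>p\<in>{p\<in>subs H. v \<in> Vsub H p}. \<alpha> p) + \<beta> v \<le> 0)"
proof -
  have kb: "real_of_int (kcap C (d \<xi>) T) - 1 \<le> real (sum b T)"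
    if T: "T \<subseteq> Vp" "T \<noteq> {}" for T
  proof (rule route_bound[OF assms(2) _ T(2) T(1)])
    show "finite T" using T(1) assms(1) finite_subset by blast
    fix vs assume "is_route Vp vs"
    then show "\<exists>y :: 'a \<Rightarrow> nat. (\<forall>v\<in>Vp. y v \<le> b v) \<and> route_flow_ok C (d \<xi>) vs y"
      using assms(5,7) by blast
  qed
  interpret L: L8 Vp C "d \<xi>" b w H
    using assms(1,4,6) kb by unfold_locales auto
  show ?thesis by (rule L.main)
qed

end
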